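(* In the setting below, if $\{\mathbb G(t)\}$ is uniformly strongly connected, then the sequence of stochastic matrices $\{S(t)\}$ has a unique absolute probability sequence $\{\pi(t)\}$, and it is given by $\pi_i(t)=\frac{y_i(t)}{n}$ for all $i\in\mathcal V$ and $t\ge0$. In particular $y^\top(t)=y^\top(t+1)S(t)$ for all $t\ge0$.
   Context: Setting. Fix $n$ agents, $\mathcal V=\{1,\dots,n\}$. For each $t\in\{0,1,2,\dots\}$, $\mathbb G(t)=(\mathcal V,\mathcal E(t))$ is a directed graph containing a self-arc $(i,i)$ at every vertex; $\mathcal N_i(t)=\{j:(j,i)\in\mathcal E(t)\}$ and $\mathcal N_i^-(t)=\{k:(i,k)\in\mathcal E(t)\}$. Weights $w_{ij}(t)$ are positive for $j\in\mathcal N_i(t)$ and $w_{ij}(t)=0$ otherwise, and satisfy: there is $\beta>0$ with $w_{ij}(t)\ge\beta$ whenever $j\in\mathcal N_i(t)$, and $\sum_{j\in\mathcal N_i^-(t)}w_{ji}(t)=1$ for all $i,t$. The sequence $\{\mathbb G(t)\}$ is uniformly strongly connected if there is a positive integer $L$ such that for every $t\ge0$ the directed graph with vertex set $\mathcal V$ and edge set $\bigcup_{k=t}^{t+L-1}\mathcal E(k)$ is strongly connected. The $y$-iteration of push-sum: $y_i(t+1)=\sum_{j}w_{ij}(t)y_j(t)$, $y_i(0)=1$. Define the row-stochastic matrix $S(t)$ with entries $s_{ij}(t)=w_{ij}(t)y_j(t)/y_i(t+1)$. Definition: for a sequence $\{S(t)\}_{t\ge0}$ of (row) stochastic matrices,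 a sequence of stochastic vectors $\{\pi(t)\}_{t\ge0}$ (nonnegative entries summing to one) is an absolute probability sequence if $\pi^\top(t)=\pi^\top(t+1)S(t)$ for all $t\ge0$. *)

theory Defs
  imports "HOL-Analysis.Analysis"
begin

text \<open>Agents are 0,...,n-1. A time-varying graph is E :: nat => (nat * nat) set,
  E t being the edge set at time t. Weights w t i j stand for w_ij(t).\<close>

definition in_nbrs :: "(nat \<Rightarrow> (nat \<times> nat) set) \<Rightarrow> nat \<Rightarrow> nat \<Rightarrow> nat set" where
  "in_nbrs E t i = {j. (j, i) \<in> E t}"

definition out_nbrs :: "(nat \<Rightarrow> (nat \<times> nat) set) \<Rightarrow> nat \<Rightarrow> nat \<Rightarrow> nat set" where
  "out_nbrs E t i = {k. (i, k) \<in> E t}"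

definition push_sum_setting ::
  "nat \<Rightarrow> (nat \<Rightarrow> (nat \<times> nat) set) \<Rightarrow> (nat \<Rightarrow> nat \<Rightarrow> nat \<Rightarrow> real) \<Rightarrow> bool" where
  "push_sum_setting n E w \<longleftrightarrow>
     (\<forall>t. E t \<subseteq> {0..<n} \<times> {0..<n}) \<and>
     (\<forall>t. \<forall>i<n. (i, i) \<in> E t) \<and>
     (\<forall>t. \<forall>i<n. \<forall>j<n. (j \<in> in_nbrs E t i \<longrightarrow> w t i j > 0) \<and>
                      (j \<notin> in_nbrs E t i \<longrightarrow> w t i j = 0)) \<and>
     (\<exists>\<beta>>0. \<forall>t. \<forall>i<n. \<forall>j\<in>in_nbrs E t i. w t i j \<ge> \<beta>) \<and>
     (\<forall>t. \<forall>i<n. (\<Sum>j\<in>out_nbrs E t i. w t j i) = 1)"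

definition strongly_connected :: "nat \<Rightarrow> (nat \<times> nat) set \<Rightarrow> bool" where
  "strongly_connected n A \<longleftrightarrow> (\<forall>i<n. \<forall>j<n. (i, j) \<in> A\<^sup>*)"

definition uniformly_strongly_connected :: "nat \<Rightarrow> (nat \<Rightarrow> (nat \<times> nat) set) \<Rightarrow> bool" where
  "uniformly_strongly_connected n E \<longleftrightarrow>
     (\<exists>L::nat. L > 0 \<and> (\<forall>t. strongly_connected n (\<Union>k\<in>{t..t + L - 1}. E k)))"

fun push_y :: "nat \<Rightarrow> (nat \<Rightarrow> nat \<Rightarrow> nat \<Rightarrow> real) \<Rightarrow> nat \<Rightarrow> nat \<Rightarrow> real" where
  "push_y n w 0 i = 1"
| "push_y n w (Suc t) i = (\<Sum>j<n. w t i j * push_y n w t j)"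

definition S_mat :: "nat \<Rightarrow> (nat \<Rightarrow> nat \<Rightarrow> nat \<Rightarrow> real) \<Rightarrow> nat \<Rightarrow> nat \<Rightarrow> nat \<Rightarrow> real" where
  "S_mat n w t i j = w t i j * push_y n w t j / push_y n w (Suc t) i"

definition stochastic_vec :: "nat \<Rightarrow> (nat \<Rightarrow> real) \<Rightarrow> bool" where
  "stochastic_vec n p \<longleftrightarrow> (\<forall>i<n. p i \<ge> 0) \<and> (\<Sum>i<n. p i) = 1"

definition abs_prob_seq ::
  "nat \<Rightarrow> (nat \<Rightarrow> nat \<Rightarrow> nat \<Rightarrow> real) \<Rightarrow> (nat \<Rightarrow> nat \<Rightarrow> real) \<Rightarrow> bool" where
  "abs_prob_seq n S \<pi> \<longleftrightarrow>
     (\<forall>t. stochastic_vec n (\<pi> t)) \<and>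
     (\<forall>t. \<forall>j<n. \<pi> t j = (\<Sum>i<n. \<pi> (Suc t) i * S t i j))"

end

theory Submission
  imports Defs
begin

fun Pm :: "nat \<Rightarrow> (nat \<Rightarrow> nat \<Rightarrow> nat \<Rightarrow> real) \<Rightarrow> nat \<Rightarrow> nat \<Rightarrow> nat \<Rightarrow> nat \<Rightarrow> real" where
  "Pm n w t 0 i j = (if i = j then 1 else 0)"
| "Pm n w t (Suc d) i j = (\<Sum>k<n. w (t+d) i k * Pm n w t d k j)"

lemma sum_ind1: "(i::nat) < n \<Longrightarrow> (\<Sum>j<n. (if i = j then 1 else 0) * (f j::real)) = f i"
proof -
  assume "i < n"
  have "(\<Sum>j<n. (if i = j then 1 else 0) * f j) = (\<Sum>j<n. if j = i then f j else 0)"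
    by (rule sum.cong) auto
  then show ?thesis using \<open>i < n\<close> by simp
qed

lemma sum_ind2: "(j::nat) < n \<Longrightarrow> (\<Sum>i<n. (if i = j then 1 else 0) * (f i::real)) = f j"
proof -
  assume "j < n"
  have "(\<Sum>i<n. (if i = j then 1 else 0) * f i) = (\<Sum>i<n. if i = j then f i else 0)"
    by (rule sum.cong) auto
  then show ?thesis using \<open>j < n\<close> by simp
qed

lemma crossing_edge:
  assumes "(a, b) \<in> A\<^sup>*" "a \<in> X" "b \<notin> X"
  shows "\<exists>u v. (u, v) \<in> A \<and> u \<in> X \<and> v \<notin> X"
  using assms
proof (induction b rule: rtrancl_induct)
  case base then show ?case by simp
next
  case (step y z)
  then show ?case by (cases "y \<in> X") auto
qed

locale ps =
  fixes n :: nat and E :: "nat \<Rightarrow> (nat \<times> nat) set" and w :: "nat \<Rightarrow> nat \<Rightarrow> nat \<Rightarrow> real"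
    and \<beta> :: real and L :: nat
  assumes n1: "n \<ge> 1"
    and Esub: "\<And>t. E t \<subseteq> {0..<n} \<times> {0..<n}"
    and self: "\<And>t i. i < n \<Longrightarrow> (i, i) \<in> E t"
    and wge: "\<And>t i j. i < n \<Longrightarrow> j < n \<Longrightarrow> (j, i) \<in> E t \<Longrightarrow> w t i j \<ge> \<beta>"
    and wzero: "\<And>t i j. i < n \<Longrightarrow> j < n \<Longrightarrow> (j, i) \<notin> E t \<Longrightarrow> w t i j = 0"
    and bpos: "\<beta> > 0"
    and colsum: "\<And>t j. j < n \<Longrightarrow> (\<Sum>i<n. w t i j) = 1"
    and Lpos: "L > 0"
    and sc: "\<And>t. strongly_connected n (\<Union>k\<in>{t..t + L - 1}. E k)"
begin

abbreviation y where "y \<equiv> push_y n w"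

lemma wnn: "i < n \<Longrightarrow> j < n \<Longrightarrow> w t i j \<ge> 0"
  using wge[of i j t] wzero[of i j t] bpos by (cases "(j, i) \<in> E t") auto

lemma ble1: "\<beta> \<le> 1"
proof -
  have "\<beta> \<le> w 0 0 0" using wge[of 0 0 0] self[of 0 0] n1 by auto
  also have "\<dots> \<le> (\<Sum>i<n. w 0 i 0)"
    by (rule member_le_sum) (use n1 wnn in auto)
  also have "\<dots> = 1" using colsum n1 by auto
  finally show ?thesis .
qed

lemma Pm_nn: "i < n \<Longrightarrow> j < n \<Longrightarrow> Pm n w t d i j \<ge> 0"
  by (induction d arbitrary: i) (auto intro!: sum_nonneg mult_nonneg_nonneg wnn)

lemma Pm_col: "j < n \<Longrightarrow> (\<Sum>i<n. Pm n w t d i j) = 1"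
proof (induction d)
  case 0 then show ?case by simp
next
  case (Suc d)
  have "(\<Sum>i<n. Pm n w t (Suc d) i j) = (\<Sum>i<n. \<Sum>k<n. w (t+d) i k * Pm n w t d k j)"
    by simp
  also have "\<dots> = (\<Sum>k<n. \<Sum>i<n. w (t+d) i k * Pm n w t d k j)"
    by (rule sum.swap)
  also have "\<dots> = (\<Sum>k<n. (\<Sum>i<n. w (t+d) i k) * Pm n w t d k j)"
    by (simp add: sum_distrib_right)
  also have "\<dots> = (\<Sum>k<n. Pm n w t d k j)" using colsum by simp
  finally show ?case using Suc by simp
qed

lemma y_Pm: "i < n \<Longrightarrow> y (t+d) i = (\<Sum>j<n. Pm n w t d i j * y t j)"
proof (induction d arbitrary: i)
  case 0 then show ?case by (simp add: sum_ind1)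
next
  case (Suc d)
  have "y (t + Suc d) i = (\<Sum>k<n. w (t+d) i k * y (t+d) k)" by simp
  also have "\<dots> = (\<Sum>k<n. w (t+d) i k * (\<Sum>j<n. Pm n w t d k j * y t j))"
    using Suc by simp
  also have "\<dots> = (\<Sum>k<n. \<Sum>j<n. w (t+d) i k * (Pm n w t d k j * y t j))"
    by (simp add: sum_distrib_left)
  also have "\<dots> = (\<Sum>j<n. \<Sum>k<n. w (t+d) i k * (Pm n w t d k j * y t j))"
    by (rule sum.swap)
  also have "\<dots> = (\<Sum>j<n. Pm n w t (Suc d) i j * y t j)"
    by (simp add: sum_distrib_right mult.assoc)
  finally show ?case .
qed

lemma r_Pm:
  assumes rec: "\<And>s k. k < n \<Longrightarrow> r s k = (\<Sum>i<n. w s i k * r (Suc s) i)"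
  shows "j < n \<Longrightarrow> r t j = (\<Sum>i<n. Pm n w t d i j * r (t+d) i)"
proof (induction d arbitrary: j)
  case 0 then show ?case by (simp add: sum_ind2)
next
  case (Suc d)
  have "r t j = (\<Sum>k<n. Pm n w t d k j * r (t+d) k)" using Suc by simp
  also have "\<dots> = (\<Sum>k<n. Pm n w t d k j * (\<Sum>i<n. w (t+d) i k * r (Suc (t+d)) i))"
    using rec by simp
  also have "\<dots> = (\<Sum>k<n. \<Sum>i<n. Pm n w t d k j * (w (t+d) i k * r (Suc (t+d)) i))"
    by (simp add: sum_distrib_left)
  also have "\<dots> = (\<Sum>i<n. \<Sum>k<n. Pm n w t d k j * (w (t+d) i k * r (Suc (t+d)) i))"
    by (rule sum.swap)
  also have "\<dots> = (\<Sum>i<n. Pm n w t (Suc d) i j * r (t + Suc d) i)"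
    by (simp add: sum_distrib_right sum_distrib_left mult_ac)
  finally show ?case .
qed

lemma y_ge: "i < n \<Longrightarrow> y s i \<ge> \<beta> ^ s"
proof (induction s arbitrary: i)
  case 0 then show ?case by simp
next
  case (Suc s)
  have nn: "\<And>j. j < n \<Longrightarrow> 0 \<le> w s i j * y s j"
    using Suc wnn bpos by (metis mult_nonneg_nonneg order.trans zero_le_power less_imp_le)
  have "\<beta> ^ Suc s \<le> w s i i * y s i"
    using Suc wge[of i i s] self[of i s] bpos
    by (simp add: mult_mono)
  also have "\<dots> \<le> (\<Sum>j<n. w s i j * y s j)"
    by (rule member_le_sum) (use Suc nn in auto)
  finally show ?case by simp
qed

lemma y_sum: "(\<Sum>i<n. y s i) = real n"
proof (induction s)
  case 0 then show ?case by simp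
next
  case (Suc s)
  have "(\<Sum>i<n. y (Suc s) i) = (\<Sum>i<n. \<Sum>j<n. w s i j * y s j)"
    by simp
  also have "\<dots> = (\<Sum>j<n. \<Sum>i<n. w s i j * y s j)"
    by (rule sum.swap)
  also have "\<dots> = (\<Sum>j<n. (\<Sum>i<n. w s i j) * y s j)"
    by (simp add: sum_distrib_right)
  also have "\<dots> = (\<Sum>j<n. y s j)" using colsum by simp
  finally show ?case using Suc by simp
qed


lemma edge_step:
  assumes "a < n" "b < n" "j < n" "(a, b) \<in> E (t+d)" "\<beta> ^ d \<le> Pm n w t d a j"
  shows "\<beta> ^ Suc d \<le> Pm n w t (Suc d) b j"
proof -
  have "\<beta> ^ Suc d = \<beta> * \<beta> ^ d" by simp
  also have "\<dots> \<le> w (t+d) b a * Pm n w t d a j"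
    using wge[of b a "t+d"] assms bpos by (intro mult_mono) auto
  also have "\<dots> \<le> (\<Sum>k<n. w (t+d) b k * Pm n w t d k j)"
    by (rule member_le_sum) (use assms wnn Pm_nn in \<open>auto intro!: mult_nonneg_nonneg\<close>)
  finally show ?thesis by simp
qed

lemma self_step:
  "i < n \<Longrightarrow> j < n \<Longrightarrow> \<beta> ^ d \<le> Pm n w t d i j \<Longrightarrow> \<beta> ^ Suc d \<le> Pm n w t (Suc d) i j"
  using edge_step self by blast

lemma Pm_mono:
  assumes "d \<le> d'" "i < n" "j < n" "\<beta> ^ d \<le> Pm n w t d i j"
  shows "\<beta> ^ d' \<le> Pm n w t d' i j"
  using assms(1)
proof (induction d' rule: dec_induct)
  case base then show ?case using assms by simp
next
  case (step m) then show ?case using self_step assms by blast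
qed

lemma Pm_grow:
  assumes "j < n"
  shows "min n (m+1) \<le> card {i\<in>{..<n}. \<beta> ^ (m*L) \<le> Pm n w t (m*L) i j}"
proof (induction m)
  case 0
  have "j \<in> {i\<in>{..<n}. \<beta> ^ (0*L) \<le> Pm n w t (0*L) i j}" using assms by simp
  moreover have "finite {i\<in>{..<n}. \<beta> ^ (0*L) \<le> Pm n w t (0*L) i j}" by simp
  ultimately have "card {i\<in>{..<n}. \<beta> ^ (0*L) \<le> Pm n w t (0*L) i j} \<ge> 1"
    by (metis One_nat_def Suc_leI card_gt_0_iff empty_iff)
  then show ?case by simp
next
  case (Suc m)
  define R where "R d = {i\<in>{..<n}. \<beta> ^ d \<le> Pm n w t d i j}" for d
  have finR: "finite (R d)" for d unfolding R_def by simp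
  have Rsub: "R d \<subseteq> {..<n}" for d unfolding R_def by auto
  have Rmono: "d \<le> d' \<Longrightarrow> R d \<subseteq> R d'" for d d'
    unfolding R_def using Pm_mono assms by auto
  have le: "m*L \<le> Suc m * L" by simp
  show ?case
  proof (cases "R (m*L) = {..<n}")
    case True
    then have "R (Suc m * L) = {..<n}" using Rmono[OF le] Rsub by blast
    then show ?thesis unfolding R_def by simp
  next
    case False
    then obtain b where b: "b < n" "b \<notin> R (m*L)" using Rsub by blast
    have jR: "j \<in> R (m*L)" using Rmono[of 0 "m*L"] assms unfolding R_def by auto
    have "(j, b) \<in> (\<Union>k\<in>{t + m*L..t + m*L + L - 1}. E k)\<^sup>*"
      using sc[of "t + m*L"] assms b unfolding strongly_connected_def by blast
    from crossing_edge[OF this jR b(2)] obtain u v k where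
      uv: "(u, v) \<in> E k" "k \<in> {t + m*L..t + m*L + L - 1}" "u \<in> R (m*L)" "v \<notin> R (m*L)"
      by blast
    have uvn: "u < n" "v < n" using uv(1) Esub[of k] by auto
    define d' where "d' = k - t"
    have d': "m*L \<le> d'" "Suc d' \<le> Suc m * L" "k = t + d'"
      using uv(2) Lpos unfolding d'_def by auto
    have "u \<in> R d'" using Rmono[OF d'(1)] uv(3) by blast
    then have "v \<in> R (Suc d')"
      using edge_step[of u v j t d'] uvn assms uv(1) d'(3) unfolding R_def by auto
    then have vR: "v \<in> R (Suc m * L)" using Rmono[OF d'(2)] by blast
    have "insert v (R (m*L)) \<subseteq> R (Suc m * L)" using vR Rmono[OF le] by blast
    then have "card (insert v (R (m*L))) \<le> card (R (Suc m * L))"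
      by (rule card_mono[OF finR])
    moreover have "card (insert v (R (m*L))) = Suc (card (R (m*L)))"
      using uv(4) finR by simp
    moreover have "card (R (m*L)) < n"
      using False Rsub card_seteq[of "{..<n}" "R (m*L)"] by fastforce
    ultimately show ?thesis using Suc unfolding R_def by simp
  qed
qed

lemma Pm_pos:
  assumes "i < n" "j < n" "(n-1)*L \<le> d"
  shows "\<beta> ^ d \<le> Pm n w t d i j"
proof -
  define R where "R = {i\<in>{..<n}. \<beta> ^ ((n-1)*L) \<le> Pm n w t ((n-1)*L) i j}"
  have "min n (n - 1 + 1) \<le> card R" unfolding R_def by (rule Pm_grow[OF assms(2)])
  then have "card {..<n} \<le> card R" using n1 by simp
  then have "R = {..<n}" using card_seteq[of "{..<n}" R] unfolding R_def by auto
  then have "\<beta> ^ ((n-1)*L) \<le> Pm n w t ((n-1)*L) i j" using assms(1) unfolding R_def by auto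
  then show ?thesis using Pm_mono assms by blast
qed


abbreviation K where "K \<equiv> (n-1)*L"

lemma y_pos: "i < n \<Longrightarrow> y s i > 0"
  using y_ge[of i s] bpos by (meson less_le_trans zero_less_power)

lemma y_lower: "i < n \<Longrightarrow> \<beta> ^ K \<le> y s i"
proof (cases "K \<le> s")
  case True
  assume i: "i < n"
  have "y s i = y ((s - K) + K) i" using True by simp
  also have "\<dots> = (\<Sum>j<n. Pm n w (s-K) K i j * y (s-K) j)" by (rule y_Pm[OF i])
  also have "\<dots> \<ge> (\<Sum>j<n. \<beta> ^ K * y (s-K) j)"
    by (rule sum_mono, rule mult_right_mono) (use Pm_pos i y_pos in \<open>auto intro: less_imp_le\<close>)
  finally have "\<beta> ^ K * real n \<le> y s i" by (simp add: sum_distrib_left[symmetric] y_sum)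
  moreover have "\<beta> ^ K \<le> \<beta> ^ K * real n" using n1 bpos by simp
  ultimately show ?thesis by linarith
next
  case False
  assume i: "i < n"
  have "\<beta> ^ K \<le> \<beta> ^ s" using False bpos ble1 by (intro power_decreasing) auto
  then show ?thesis using y_ge[OF i, of s] by linarith
qed

lemma contract:
  assumes rec: "\<And>s k. k < n \<Longrightarrow> r s k = (\<Sum>i<n. w s i k * r (Suc s) i)"
    and B: "\<And>a b. a < n \<Longrightarrow> b < n \<Longrightarrow> \<bar>r (t+K) a - r (t+K) b\<bar> \<le> B"
    and ij: "i < n" "j < n"
  shows "\<bar>r t i - r t j\<bar> \<le> (1 - \<beta> ^ K) * B"
proof -
  define f where "f = r (t+K)"
  define \<delta> where "\<delta> = \<beta> ^ K"
  define M where "M = Max (f ` {..<n})"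
  define m where "m = Min (f ` {..<n})"
  have ne: "f ` {..<n} \<noteq> {}" using n1 by (auto simp: lessThan_empty_iff)
  obtain a0 where a0: "a0 < n" "f a0 = M" using Max_in[OF _ ne] unfolding M_def by auto
  obtain b0 where b0: "b0 < n" "f b0 = m" using Min_in[OF _ ne] unfolding m_def by auto
  have fM: "a < n \<Longrightarrow> f a \<le> M" for a unfolding M_def by auto
  have fm: "a < n \<Longrightarrow> m \<le> f a" for a unfolding m_def by auto
  have MmB: "M - m \<le> B" using B[OF a0(1) b0(1)] a0 b0 unfolding f_def by simp
  have Mm: "0 \<le> M - m" using fM[OF a0(1)] fm[OF a0(1)] by simp
  have d01: "0 \<le> \<delta>" "\<delta> \<le> 1" unfolding \<delta>_def using bpos ble1 by (auto simp: power_le_one)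
  have rt: "x < n \<Longrightarrow> r t x = (\<Sum>a<n. Pm n w t K a x * f a)" for x
    using r_Pm[OF rec, of x t K] unfolding f_def by (simp add: mult.commute)
  have low: "m + \<delta> * (M - m) \<le> r t x" if x: "x < n" for x
  proof -
    have "(\<Sum>a<n. Pm n w t K a x * (f a - m)) = (\<Sum>a<n. Pm n w t K a x * f a) - m * (\<Sum>a<n. Pm n w t K a x)"
      by (simp add: algebra_simps sum_subtractf sum_distrib_left)
    also have "\<dots> = r t x - m" using Pm_col[OF x] rt[OF x] by simp
    finally have eq: "(\<Sum>a<n. Pm n w t K a x * (f a - m)) = r t x - m" .
    have "\<delta> * (M - m) \<le> Pm n w t K a0 x * (f a0 - m)"
      using Pm_pos[OF a0(1) x, of K t] a0 Mm unfolding \<delta>_def by (simp add: mult_right_mono)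
    also have "\<dots> \<le> (\<Sum>a<n. Pm n w t K a x * (f a - m))"
      by (rule member_le_sum) (use a0 Pm_nn x fm in \<open>auto intro!: mult_nonneg_nonneg\<close>)
    finally show ?thesis using eq by linarith
  qed
  have up: "r t x \<le> M - \<delta> * (M - m)" if x: "x < n" for x
  proof -
    have "(\<Sum>a<n. Pm n w t K a x * (M - f a)) = M * (\<Sum>a<n. Pm n w t K a x) - (\<Sum>a<n. Pm n w t K a x * f a)"
      by (simp add: algebra_simps sum_subtractf sum_distrib_left)
    also have "\<dots> = M - r t x" using Pm_col[OF x] rt[OF x] by simp
    finally have eq: "(\<Sum>a<n. Pm n w t K a x * (M - f a)) = M - r t x" .
    have "\<delta> * (M - m) \<le> Pm n w t K b0 x * (M - f b0)"
      using Pm_pos[OF b0(1) x, of K t] b0 Mm unfolding \<delta>_def by (simp add: mult_right_mono)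
    also have "\<dots> \<le> (\<Sum>a<n. Pm n w t K a x * (M - f a))"
      by (rule member_le_sum) (use b0 Pm_nn x fM in \<open>auto intro!: mult_nonneg_nonneg\<close>)
    finally show ?thesis using eq by linarith
  qed
  have "\<bar>r t i - r t j\<bar> \<le> (1 - 2*\<delta>) * (M - m)"
    using low[OF ij(1)] low[OF ij(2)] up[OF ij(1)] up[OF ij(2)] by (simp add: algebra_simps abs_le_iff)
  also have "\<dots> \<le> (1 - \<delta>) * (M - m)" using d01 Mm by (intro mult_right_mono) auto
  also have "\<dots> \<le> (1 - \<delta>) * B" using d01 MmB by (intro mult_left_mono) auto
  finally show ?thesis unfolding \<delta>_def .
qed

lemma iterate:
  assumes rec: "\<And>s k. k < n \<Longrightarrow> r s k = (\<Sum>i<n. w s i k * r (Suc s) i)"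
    and bd: "\<And>s a. a < n \<Longrightarrow> 0 \<le> r s a \<and> r s a \<le> C"
  shows "i < n \<Longrightarrow> j < n \<Longrightarrow> \<bar>r t i - r t j\<bar> \<le> (1 - \<beta> ^ K) ^ m * C"
proof (induction m arbitrary: t i j)
  case 0 then show ?case using bd[of i t] bd[of j t] by (simp add: abs_le_iff)
next
  case (Suc m)
  have "\<bar>r t i - r t j\<bar> \<le> (1 - \<beta> ^ K) * ((1 - \<beta> ^ K) ^ m * C)"
    by (rule contract[OF rec]) (use Suc in auto)
  then show ?case by (simp add: mult.assoc)
qed

lemma r_const:
  assumes rec: "\<And>s k. k < n \<Longrightarrow> r s k = (\<Sum>i<n. w s i k * r (Suc s) i)"
    and bd: "\<And>s a. a < n \<Longrightarrow> 0 \<le> r s a \<and> r s a \<le> C"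
    and C: "C > 0"
    and ij: "i < n" "j < n"
  shows "r t i = r t j"
proof (rule ccontr)
  assume ne: "r t i \<noteq> r t j"
  have q: "0 \<le> 1 - \<beta> ^ K" "1 - \<beta> ^ K < 1" using bpos ble1 by (auto simp: power_le_one)
  obtain m where m: "(1 - \<beta> ^ K) ^ m < \<bar>r t i - r t j\<bar> / C"
    using real_arch_pow_inv[of "\<bar>r t i - r t j\<bar> / C" "1 - \<beta> ^ K"] ne C q by auto
  have "\<bar>r t i - r t j\<bar> \<le> (1 - \<beta> ^ K) ^ m * C" by (rule iterate[OF rec bd ij])
  also have "\<dots> < \<bar>r t i - r t j\<bar>" using m C by (simp add: pos_less_divide_eq)
  finally show False by simp
qed


lemma part3: "j < n \<Longrightarrow> y t j = (\<Sum>i<n. y (Suc t) i * S_mat n w t i j)"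
proof -
  assume j: "j < n"
  have "(\<Sum>i<n. y (Suc t) i * S_mat n w t i j) = (\<Sum>i<n. w t i j * y t j)"
  proof (rule sum.cong)
    fix i assume "i \<in> {..<n}"
    then have "y (Suc t) i > 0" by (metis lessThan_iff y_pos)
    then show "y (Suc t) i * S_mat n w t i j = w t i j * y t j"
      unfolding S_mat_def by simp
  qed simp
  also have "\<dots> = y t j" using colsum[OF j] by (simp add: sum_distrib_right[symmetric])
  finally show ?thesis by simp
qed

lemma part1: "abs_prob_seq n (S_mat n w) (\<lambda>t i. y t i / real n)"
  unfolding abs_prob_seq_def stochastic_vec_def
proof (intro conjI allI impI)
  fix t i assume "i < n" then show "0 \<le> y t i / real n" using y_pos[of i t] by simp
next
  fix t show "(\<Sum>i<n. y t i / real n) = 1" using y_sum n1 by (simp add: sum_divide_distrib[symmetric])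
next
  fix t j assume "j < n"
  then show "y t j / real n = (\<Sum>i<n. y (Suc t) i / real n * S_mat n w t i j)"
    using part3 by (simp add: sum_divide_distrib[symmetric])
qed

lemma part2:
  assumes "abs_prob_seq n (S_mat n w) \<pi>" "i < n"
  shows "\<pi> t i = y t i / real n"
proof -
  have st: "\<And>t. stochastic_vec n (\<pi> t)"
    and pr: "\<And>t j. j < n \<Longrightarrow> \<pi> t j = (\<Sum>i<n. \<pi> (Suc t) i * S_mat n w t i j)"
    using assms(1) unfolding abs_prob_seq_def by auto
  define r where "r t i = \<pi> t i / y t i" for t i
  have rec: "r s k = (\<Sum>i<n. w s i k * r (Suc s) i)" if k: "k < n" for s k
  proof -
    have "\<pi> s k = (\<Sum>i<n. w s i k * r (Suc s) i) * y s k"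
      unfolding pr[OF k] r_def S_mat_def sum_distrib_right by (rule sum.cong) auto
    then show ?thesis unfolding r_def using y_pos[OF k, of s] by simp
  qed
  have pnn: "a < n \<Longrightarrow> 0 \<le> \<pi> s a" for s a using st[of s] unfolding stochastic_vec_def by auto
  have ple: "a < n \<Longrightarrow> \<pi> s a \<le> 1" for s a
  proof -
    assume a: "a < n"
    have "\<pi> s a \<le> (\<Sum>b<n. \<pi> s b)" by (rule member_le_sum) (use a pnn in auto)
    then show ?thesis using st[of s] unfolding stochastic_vec_def by simp
  qed
  have bd: "0 \<le> r s a \<and> r s a \<le> 1 / \<beta> ^ K" if a: "a < n" for s a
  proof
    show "0 \<le> r s a" unfolding r_def using pnn[OF a] y_pos[OF a, of s] by simp
    have yl: "\<beta> ^ K \<le> y s a" by (rule y_lower[OF a])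
    have "r s a \<le> 1 / y s a" unfolding r_def using ple[OF a] y_pos[OF a, of s]
      by (simp add: divide_right_mono)
    also have "\<dots> \<le> 1 / \<beta> ^ K" using yl bpos by (simp add: frac_le)
    finally show "r s a \<le> 1 / \<beta> ^ K" .
  qed
  have C: "1 / \<beta> ^ K > 0" using bpos by simp
  have const: "r t a = r t 0" if a: "a < n" for a
    using r_const[OF rec bd C, of a 0 t] n1 a by linarith
  have "1 = (\<Sum>a<n. \<pi> t a)" using st[of t] unfolding stochastic_vec_def by simp
  also have "\<dots> = (\<Sum>a<n. r t 0 * y t a)"
  proof (rule sum.cong)
    fix a assume a: "a \<in> {..<n}"
    then have "r t a = r t 0" by (intro const) simp
    moreover have "y t a > 0" using a y_pos by simp
    ultimately show "\<pi> t a = r t 0 * y t a" unfolding r_def by (metis nonzero_eq_divide_eq less_irrefl)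
  qed simp
  also have "\<dots> = r t 0 * real n" by (simp add: sum_distrib_left[symmetric] y_sum)
  finally have "r t 0 = 1 / real n" using n1 by (simp add: field_simps)
  then have "\<pi> t i = y t i / real n" using const[OF assms(2)] y_pos[OF assms(2), of t]
    unfolding r_def by (simp add: field_simps)
  then show ?thesis .
qed

end

theorem proposition2:
  fixes n :: nat and E :: "nat \<Rightarrow> (nat \<times> nat) set" and w :: "nat \<Rightarrow> nat \<Rightarrow> nat \<Rightarrow> real"
  assumes "n \<ge> 1"
    and "push_sum_setting n E w"
    and "uniformly_strongly_connected n E"
  shows "abs_prob_seq n (S_mat n w) (\<lambda>t i. push_y n w t i / real n)
       \<and> (\<forall>\<pi>. abs_prob_seq n (S_mat n w) \<pi> \<longrightarrow>
              (\<forall>t. \<forall>i<n. \<pi> t i = push_y n w t i / real n))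
       \<and> (\<forall>t. \<forall>j<n. push_y n w t j = (\<Sum>i<n. push_y n w (Suc t) i * S_mat n w t i j))"
proof -
  note S = assms(2)[unfolded push_sum_setting_def]
  have Esub: "\<And>t. E t \<subseteq> {0..<n} \<times> {0..<n}" using S by blast
  have self: "\<And>t i. i < n \<Longrightarrow> (i, i) \<in> E t" using S by blast
  have wpz: "\<And>t i j. i < n \<Longrightarrow> j < n \<Longrightarrow> (j \<in> in_nbrs E t i \<longrightarrow> w t i j > 0) \<and>
                      (j \<notin> in_nbrs E t i \<longrightarrow> w t i j = 0)" using S by blast
  obtain \<beta> where b: "\<beta> > 0" "\<And>t i j. i < n \<Longrightarrow> j \<in> in_nbrs E t i \<Longrightarrow> w t i j \<ge> \<beta>"
    using S by blast
  have cs: "\<And>t i. i < n \<Longrightarrow> (\<Sum>j\<in>out_nbrs E t i. w t j i) = 1" using S by blast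
  obtain L where L: "L > 0" "\<And>t. strongly_connected n (\<Union>k\<in>{t..t + L - 1}. E k)"
    using assms(3) unfolding uniformly_strongly_connected_def by blast
  have colsum: "(\<Sum>i<n. w t i j) = 1" if j: "j < n" for t j
  proof -
    have sub: "out_nbrs E t j \<subseteq> {..<n}" using Esub[of t] unfolding out_nbrs_def by auto
    have "(\<Sum>i<n. w t i j) = (\<Sum>i\<in>out_nbrs E t j. w t i j)"
    proof (rule sum.mono_neutral_right)
      show "\<forall>i\<in>{..<n} - out_nbrs E t j. w t i j = 0"
        using wpz j unfolding out_nbrs_def in_nbrs_def by auto
    qed (use sub in auto)
    then show ?thesis using cs[OF j] by simp
  qed
  interpret ps n E w \<beta> L
  proof
    show "\<And>t i j. i < n \<Longrightarrow> j < n \<Longrightarrow> (j, i) \<in> E t \<Longrightarrow> \<beta> \<le> w t i j"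
      using b(2) unfolding in_nbrs_def by auto
    show "\<And>t i j. i < n \<Longrightarrow> j < n \<Longrightarrow> (j, i) \<notin> E t \<Longrightarrow> w t i j = 0"
      using wpz unfolding in_nbrs_def by auto
  qed (use assms(1) Esub self b(1) colsum L in auto)
  show ?thesis using part1 part2 part3 by blast
qed

end
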